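(* Let $n\ge 3$ and $m\ge 3$, let $C_n$ be a cycle on $n$ vertices and $P_m$ a path on $m$ vertices, and let $H$ be the graph obtained by identifying one vertex of $C_n$ with an endpoint of $P_m$ (a $1$-clique sum of $C_n$ and $P_m$). Then $$v(C_n)+v(P_{m-2})-1\le v(H)\le v(C_n)+v(P_{m-2}).$$
   Context: Let $K$ be a field and $S$ a standard graded polynomial ring over $K$. For a proper graded ideal $I\subset S$, the $v$-number is $v(I)=\min\{k\ge 0 : \exists f\in S_k,\ \mathcal P\in\operatorname{Ass}(S/I) \text{ with } (I:f)=\mathcal P\}$. For a finite simple graph $G$ whose vertices are variables of a polynomial ring, $I(G)$ is the edge ideal generated by $x_ix_j$ over edges $\{x_i,x_j\}$, and $v(G):=v(I(G))$. $P_k$ denotes the path on $k$ vertices (vertices $y_1,\dots,y_k$, edges $\{y_i,y_{i+1}\}$) and $C_n$ the cycle on $n$ vertices. A $1$-clique sum of graphs $G_1,G_2$ is $G_1\cup G_2$ where $G_1\cap G_2$ is a single vertex and neither $G_i$ is a single vertex. *)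

theory Defs
  imports "HOL-Library.Poly_Mapping"
begin

text \<open>Polynomials over a field 'k in variables indexed by naturals, represented as
finitely supported maps from monomials (exponent vectors) to coefficients.
For a finite vertex set V we work in the polynomial ring S = K[x_i : i \<in> V],
realised as the subring of polynomials whose variables all lie in V.\<close>

type_synonym 'k mpoly = "(nat \<Rightarrow>\<^sub>0 nat) \<Rightarrow>\<^sub>0 'k"

definition polyring :: "nat set \<Rightarrow> 'k::field mpoly set" where
  "polyring V = {p :: 'k mpoly. \<forall>m \<in> Poly_Mapping.keys p. Poly_Mapping.keys m \<subseteq> V}"

definition var :: "nat \<Rightarrow> 'k::field mpoly" where
  "var i = Poly_Mapping.single (Poly_Mapping.single i 1) 1"

definition mdeg :: "(nat \<Rightarrow>\<^sub>0 nat) \<Rightarrow> nat" where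
  "mdeg m = (\<Sum>i \<in> Poly_Mapping.keys m. Poly_Mapping.lookup m i)"

definition homog :: "nat set \<Rightarrow> nat \<Rightarrow> 'k::field mpoly \<Rightarrow> bool" where
  "homog V k f \<longleftrightarrow> f \<in> polyring V \<and> (\<forall>m \<in> Poly_Mapping.keys f. mdeg m = k)"

definition gen_ideal :: "nat set \<Rightarrow> 'k::field mpoly set \<Rightarrow> 'k mpoly set" where
  "gen_ideal V Gs = {(\<Sum>g\<in>F. c g * g) | F c. finite F \<and> F \<subseteq> Gs \<and> (\<forall>g\<in>F. c g \<in> polyring V)}"

definition is_ideal :: "nat set \<Rightarrow> 'k::field mpoly set \<Rightarrow> bool" where
  "is_ideal V I \<longleftrightarrow> I \<subseteq> polyring V \<and> 0 \<in> I \<and> (\<forall>a\<in>I. \<forall>b\<in>I. a + b \<in> I)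
     \<and> (\<forall>r\<in>polyring V. \<forall>a\<in>I. r * a \<in> I)"

definition prime_ideal :: "nat set \<Rightarrow> 'k::field mpoly set \<Rightarrow> bool" where
  "prime_ideal V P \<longleftrightarrow> is_ideal V P \<and> P \<noteq> polyring V
     \<and> (\<forall>a\<in>polyring V. \<forall>b\<in>polyring V. a * b \<in> P \<longrightarrow> a \<in> P \<or> b \<in> P)"

definition colon :: "nat set \<Rightarrow> 'k::field mpoly set \<Rightarrow> 'k mpoly \<Rightarrow> 'k mpoly set" where
  "colon V I f = {g \<in> polyring V. g * f \<in> I}"

definition ass :: "nat set \<Rightarrow> 'k::field mpoly set \<Rightarrow> 'k mpoly set set" where
  "ass V I = {P. prime_ideal V P \<and> (\<exists>g \<in> polyring V. colon V I g = P)}"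

definition v_number :: "nat set \<Rightarrow> 'k::field mpoly set \<Rightarrow> nat" where
  "v_number V I = (LEAST k. \<exists>f P. homog V k f \<and> P \<in> ass V I \<and> colon V I f = P)"

definition edge_ideal :: "nat set \<Rightarrow> nat set set \<Rightarrow> 'k::field mpoly set" where
  "edge_ideal V E = gen_ideal V {var i * var j | i j. {i, j} \<in> E}"

definition v_graph :: "'k::field itself \<Rightarrow> nat set \<Rightarrow> nat set set \<Rightarrow> nat" where
  "v_graph TYPE('k) V E = v_number V (edge_ideal V E :: 'k mpoly set)"

definition path_V :: "nat \<Rightarrow> nat set" where "path_V k = {1..k}"
definition path_E :: "nat \<Rightarrow> nat set set" where
  "path_E k = {{i, i + 1} | i. 1 \<le> i \<and> i < k}"
definition cycle_V :: "nat \<Rightarrow> nat set" where "cycle_V n = {1..n}"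
definition cycle_E :: "nat \<Rightarrow> nat set set" where
  "cycle_E n = {{i, i + 1} | i. 1 \<le> i \<and> i < n} \<union> {{n, 1}}"

text \<open>H = 1-clique sum of C_n (vertices 1..n) and P_m (vertices n..n+m-1),
glued at the cycle vertex n, which is an endpoint of the path.\<close>
definition cp_V :: "nat \<Rightarrow> nat \<Rightarrow> nat set" where "cp_V n m = {1..n + m - 1}"
definition cp_E :: "nat \<Rightarrow> nat \<Rightarrow> nat set set" where
  "cp_E n m = cycle_E n \<union> {{i, i + 1} | i. n \<le> i \<and> i < n + m - 1}"

end

theory Submission
  imports Defs
begin

abbreviation mon :: "(nat \<Rightarrow>\<^sub>0 nat) \<Rightarrow> 'k::field mpoly" where
  "mon t \<equiv> Poly_Mapping.single t 1"

lemma lookup_single_mult: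
  fixes p :: "'k::field mpoly"
  shows "Poly_Mapping.lookup (Poly_Mapping.single t c * p) (t + s) = c * Poly_Mapping.lookup p s"
proof -
  have "Poly_Mapping.lookup (Poly_Mapping.single t c * p) (t + s)
     = (\<Sum>l. (c when t = l) * (\<Sum>q. Poly_Mapping.lookup p q when t + s = l + q))"
    by (simp add: lookup_mult lookup_single)
  also have "\<dots> = c * (\<Sum>q. Poly_Mapping.lookup p q when t + s = t + q)"
    by (simp add: when_mult)
  also have "\<dots> = c * Poly_Mapping.lookup p s"
    by simp
  finally show ?thesis .
qed

lemma keys_single_mult:
  fixes p :: "'k::field mpoly"
  assumes "c \<noteq> 0"
  shows "Poly_Mapping.keys (Poly_Mapping.single t c * p) = (\<lambda>s. t + s) ` Poly_Mapping.keys p"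
proof
  show "Poly_Mapping.keys (Poly_Mapping.single t c * p) \<subseteq> (\<lambda>s. t + s) ` Poly_Mapping.keys p"
    using keys_mult[of "Poly_Mapping.single t c" p] assms by auto
  show "(\<lambda>s. t + s) ` Poly_Mapping.keys p \<subseteq> Poly_Mapping.keys (Poly_Mapping.single t c * p)"
    using assms by (auto simp: in_keys_iff lookup_single_mult)
qed

lemma lookup_add_nat: "Poly_Mapping.lookup ((s::nat \<Rightarrow>\<^sub>0 nat) + t) i = Poly_Mapping.lookup s i + Poly_Mapping.lookup t i"
  by (simp add: lookup_add)

lemma keys_add_nat: "Poly_Mapping.keys ((s::nat \<Rightarrow>\<^sub>0 nat) + t) = Poly_Mapping.keys s \<union> Poly_Mapping.keys t"
  by (auto simp: in_keys_iff lookup_add)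

lemma polyring_iff: "p \<in> polyring V \<longleftrightarrow> (\<forall>m\<in>Poly_Mapping.keys p. Poly_Mapping.keys m \<subseteq> V)"
  by (simp add: polyring_def)

lemma polyring_zero[simp]: "0 \<in> polyring V"
  by (simp add: polyring_def)

lemma polyring_add: "a \<in> polyring V \<Longrightarrow> b \<in> polyring V \<Longrightarrow> a + b \<in> polyring V"
  using keys_add[of a b] by (auto simp: polyring_def)

lemma polyring_mult: "a \<in> polyring V \<Longrightarrow> b \<in> polyring V \<Longrightarrow> a * b \<in> polyring V"
  using keys_mult[of a b] by (fastforce simp: polyring_def keys_add_nat)

lemma polyring_single: "Poly_Mapping.keys t \<subseteq> V \<Longrightarrow> Poly_Mapping.single t c \<in> polyring V"
  by (simp add: polyring_def)

lemma polyring_one[simp]: "(1::'k::field mpoly) \<in> polyring V"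
  by (simp add: polyring_def)

lemma polyring_sum: "(\<And>x. x \<in> S \<Longrightarrow> f x \<in> polyring V) \<Longrightarrow> sum f S \<in> polyring V"
  by (induction S rule: infinite_finite_induct) (auto intro: polyring_add)

lemma poly_expand:
  fixes p :: "'k::field mpoly"
  shows "p = (\<Sum>t\<in>Poly_Mapping.keys p. Poly_Mapping.single t (Poly_Mapping.lookup p t))"
proof (rule poly_mapping_eqI)
  fix k
  have "Poly_Mapping.lookup (\<Sum>t\<in>Poly_Mapping.keys p. Poly_Mapping.single t (Poly_Mapping.lookup p t)) k = (\<Sum>t\<in>Poly_Mapping.keys p. Poly_Mapping.lookup (Poly_Mapping.single t (Poly_Mapping.lookup p t)) k)"
    by (simp add: lookup_sum)
  also have "\<dots> = (\<Sum>t\<in>Poly_Mapping.keys p. if t = k then Poly_Mapping.lookup p t else 0)"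
    by (intro sum.cong) (auto simp: lookup_single when_def)
  also have "\<dots> = Poly_Mapping.lookup p k"
    by (auto simp: sum.delta in_keys_iff)
  finally show "Poly_Mapping.lookup p k = Poly_Mapping.lookup (\<Sum>t\<in>Poly_Mapping.keys p. Poly_Mapping.single t (Poly_Mapping.lookup p t)) k" by simp
qed

definition divs :: "nat set set \<Rightarrow> (nat \<Rightarrow>\<^sub>0 nat) \<Rightarrow> bool" where
  "divs E t \<longleftrightarrow> (\<exists>i j. {i,j} \<in> E \<and> i \<noteq> j \<and> 0 < Poly_Mapping.lookup t i \<and> 0 < Poly_Mapping.lookup t j)"

definition edges_ok :: "nat set \<Rightarrow> nat set set \<Rightarrow> bool" where
  "edges_ok V E \<longleftrightarrow> (\<forall>e\<in>E. \<exists>i j. e = {i,j} \<and> i \<noteq> j \<and> i \<in> V \<and> j \<in> V)"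

lemma gen_ideal_zero: "0 \<in> gen_ideal V Gs"
  unfolding gen_ideal_def by (rule CollectI, rule exI[of _ "{}"], auto)

lemma gen_ideal_add:
  assumes "a \<in> gen_ideal V Gs" "b \<in> gen_ideal V Gs"
  shows "a + b \<in> gen_ideal V Gs"
proof -
  obtain F1 c1 where 1: "a = (\<Sum>g\<in>F1. c1 g * g)" "finite F1" "F1 \<subseteq> Gs" "\<forall>g\<in>F1. c1 g \<in> polyring V"
    using assms(1) unfolding gen_ideal_def by blast
  obtain F2 c2 where 2: "b = (\<Sum>g\<in>F2. c2 g * g)" "finite F2" "F2 \<subseteq> Gs" "\<forall>g\<in>F2. c2 g \<in> polyring V"
    using assms(2) unfolding gen_ideal_def by blast
  define c where "c g = (if g \<in> F1 then c1 g else 0) + (if g \<in> F2 then c2 g else 0)" for g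
  have "c g * g = (if g \<in> F1 then c1 g * g else 0) + (if g \<in> F2 then c2 g * g else 0)" for g
    by (simp add: c_def distrib_right)
  hence "(\<Sum>g\<in>F1 \<union> F2. c g * g) = (\<Sum>g\<in>F1 \<union> F2. (if g \<in> F1 then c1 g * g else 0))
        + (\<Sum>g\<in>F1 \<union> F2. (if g \<in> F2 then c2 g * g else 0))"
    by (simp add: sum.distrib)
  also have "\<dots> = a + b"
    using 1 2 by (simp add: sum.inter_restrict[symmetric] Int_absorb1)
  finally have eq: "a + b = (\<Sum>g\<in>F1 \<union> F2. c g * g)" by simp
  have pc: "\<forall>g\<in>F1 \<union> F2. c g \<in> polyring V"
    using 1 2 by (auto simp: c_def intro: polyring_add)
  show ?thesis
    unfolding gen_ideal_def
  proof (intro CollectI exI conjI)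
    show "a + b = (\<Sum>g\<in>F1 \<union> F2. c g * g)" by (rule eq)
    show "finite (F1 \<union> F2)" using 1 2 by simp
    show "F1 \<union> F2 \<subseteq> Gs" using 1 2 by simp
    show "\<forall>g\<in>F1 \<union> F2. c g \<in> polyring V" by (rule pc)
  qed
qed

lemma gen_ideal_gen:
  assumes "g \<in> Gs" "r \<in> polyring V"
  shows "r * g \<in> gen_ideal V Gs"
  unfolding gen_ideal_def
  by (rule CollectI, rule exI[of _ "{g}"], rule exI[of _ "\<lambda>_. r"]) (use assms in auto)

lemma gen_ideal_sum:
  "(\<And>x. x \<in> S \<Longrightarrow> f x \<in> gen_ideal V Gs) \<Longrightarrow> sum f S \<in> gen_ideal V Gs"
  by (induction S rule: infinite_finite_induct) (auto intro: gen_ideal_add gen_ideal_zero)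

lemma var_mult_var: "(var i * var j :: 'k::field mpoly) = mon (Poly_Mapping.single i 1 + Poly_Mapping.single j 1)"
  by (simp add: var_def mult_single)

lemma single_in_edge_ideal:
  assumes "divs E t" "Poly_Mapping.keys t \<subseteq> V"
  shows "(Poly_Mapping.single t c :: 'k::field mpoly) \<in> edge_ideal V E"
proof -
  obtain i j where ij: "{i,j} \<in> E" "i \<noteq> j" "0 < Poly_Mapping.lookup t i" "0 < Poly_Mapping.lookup t j"
    using assms(1) unfolding divs_def by blast
  define e :: "nat \<Rightarrow>\<^sub>0 nat" where "e = Poly_Mapping.single i 1 + Poly_Mapping.single j 1"
  define r where "r = t - e"
  have le: "Poly_Mapping.lookup e k \<le> Poly_Mapping.lookup t k" for k
    using ij by (auto simp: e_def lookup_add lookup_single when_def)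
  have t: "t = r + e"
    by (rule poly_mapping_eqI) (use le in \<open>simp add: r_def lookup_add lookup_minus\<close>)
  have "Poly_Mapping.keys r \<subseteq> Poly_Mapping.keys t"
    using le by (auto simp: r_def in_keys_iff lookup_minus)
  hence r: "Poly_Mapping.single r c \<in> polyring V" using assms(2) by (intro polyring_single) auto
  have eq: "Poly_Mapping.single t c = Poly_Mapping.single r c * (var i * var j :: 'k mpoly)"
    by (simp add: var_mult_var mult_single t e_def)
  have mem: "(var i * var j :: 'k mpoly) \<in> {var i * var j | i j. {i, j} \<in> E}"
    using ij(1) by (intro CollectI exI[of _ i] exI[of _ j]) simp
  show ?thesis
    unfolding edge_ideal_def eq by (rule gen_ideal_gen[OF mem r])
qed

lemma edge_ideal_iff:
  assumes "edges_ok V E"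
  shows "(p :: 'k::field mpoly) \<in> edge_ideal V E \<longleftrightarrow> p \<in> polyring V \<and> (\<forall>t\<in>Poly_Mapping.keys p. divs E t)"
proof
  assume p: "p \<in> edge_ideal V E"
  define good where "good x \<longleftrightarrow> x \<in> polyring V \<and> (\<forall>t\<in>Poly_Mapping.keys x. divs E t)" for x :: "'k mpoly"
  have good_sum: "good (sum f F)" if "\<And>g. g \<in> F \<Longrightarrow> good (f g)" for f :: "'k mpoly \<Rightarrow> 'k mpoly" and F
    using that
  proof (induction F rule: infinite_finite_induct)
    case (insert x F)
    then show ?case using keys_add[of "f x" "sum f F"]
      by (auto simp: good_def intro: polyring_add)
  qed (auto simp: good_def)
  obtain F c where F: "p = (\<Sum>g\<in>F. c g * g)" "F \<subseteq> {var i * var j | i j. {i, j} \<in> E}"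
      "\<forall>g\<in>F. c g \<in> polyring V"
    using p unfolding edge_ideal_def gen_ideal_def by blast
  have "good (c g * g)" if gF: "g \<in> F" for g
  proof -
    obtain i j where g: "g = var i * var j" "{i,j} \<in> E" using F(2) gF by blast
    then obtain i' j' where "{i,j} = {i',j'}" "i' \<noteq> j'" "i' \<in> V" "j' \<in> V"
      using assms unfolding edges_ok_def by blast
    hence ij: "i \<noteq> j" "i \<in> V" "j \<in> V" by (auto simp: doubleton_eq_iff)
    define e :: "nat \<Rightarrow>\<^sub>0 nat" where "e = Poly_Mapping.single i 1 + Poly_Mapping.single j 1"
    have ge: "g = mon e" by (simp add: g var_mult_var e_def)
    have "Poly_Mapping.keys (c g * g) = (\<lambda>s. e + s) ` Poly_Mapping.keys (c g)"
      by (simp add: ge mult.commute[of _ "mon e"] keys_single_mult)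
    moreover have "divs E (e + s)" for s
      unfolding divs_def by (rule exI[of _ i], rule exI[of _ j]) (use g ij in \<open>auto simp: e_def lookup_add\<close>)
    moreover have "c g * g \<in> polyring V"
      using F(3) gF ij by (auto simp: ge e_def keys_add_nat intro!: polyring_mult polyring_single)
    ultimately show ?thesis by (auto simp: good_def)
  qed
  hence "good p" unfolding F(1) by (rule good_sum)
  thus "p \<in> polyring V \<and> (\<forall>t\<in>Poly_Mapping.keys p. divs E t)" by (simp add: good_def)
next
  assume p: "p \<in> polyring V \<and> (\<forall>t\<in>Poly_Mapping.keys p. divs E t)"
  define X where "X = (\<Sum>t\<in>Poly_Mapping.keys p. Poly_Mapping.single t (Poly_Mapping.lookup p t) :: 'k mpoly)"
  have pX: "p = X" unfolding X_def by (rule poly_expand)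
  have "X \<in> edge_ideal V E"
    unfolding X_def edge_ideal_def
  proof (rule gen_ideal_sum)
    fix t assume t: "t \<in> Poly_Mapping.keys p"
    have "Poly_Mapping.keys t \<subseteq> V" using p t by (auto simp: polyring_def)
    hence "Poly_Mapping.single t (Poly_Mapping.lookup p t) \<in> edge_ideal V E"
      using p t by (intro single_in_edge_ideal) auto
    thus "Poly_Mapping.single t (Poly_Mapping.lookup p t) \<in> gen_ideal V {var i * var j |i j. {i, j} \<in> E}"
      by (simp add: edge_ideal_def)
  qed
  thus "p \<in> edge_ideal V E" using pX by simp
qed


definition nbr :: "nat set set \<Rightarrow> nat set \<Rightarrow> nat set" where
  "nbr E A = {i. \<exists>a\<in>A. {i,a} \<in> E}"

definition wit :: "nat set \<Rightarrow> nat set set \<Rightarrow> nat set \<Rightarrow> bool" where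
  "wit V E A \<longleftrightarrow> A \<subseteq> V \<and> (\<forall>x\<in>A. \<forall>y\<in>A. {x,y} \<notin> E)
     \<and> (\<forall>x y. {x,y} \<in> E \<longrightarrow> x \<in> nbr E A \<or> y \<in> nbr E A)"

definition gam :: "nat set \<Rightarrow> nat set set \<Rightarrow> nat" where
  "gam V E = (LEAST k. \<exists>A. wit V E A \<and> card A = k)"

lemma lookup_sum_single:
  assumes "finite S"
  shows "Poly_Mapping.lookup (\<Sum>s\<in>S. Poly_Mapping.single s (h s)) k = (if k \<in> S then h k else 0)"
proof -
  have "Poly_Mapping.lookup (\<Sum>s\<in>S. Poly_Mapping.single s (h s)) k
      = (\<Sum>s\<in>S. if s = k then h s else 0)"
    by (simp add: lookup_sum lookup_single when_def)
  also have "\<dots> = (if k \<in> S then h k else 0)"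
    using assms by (simp add: sum.delta)
  finally show ?thesis .
qed

definition HC :: "nat set \<Rightarrow> 'k::field mpoly \<Rightarrow> bool" where
  "HC C x \<longleftrightarrow> (\<forall>s\<in>Poly_Mapping.keys x. \<exists>i\<in>C. 0 < Poly_Mapping.lookup s i)"

lemma HC_add: "HC C x \<Longrightarrow> HC C y \<Longrightarrow> HC C (x + y)"
  using keys_add[of x y] unfolding HC_def by blast

lemma HC_multL:
  assumes "HC C x" shows "HC C (y * x)"
  unfolding HC_def
proof
  fix s assume "s \<in> Poly_Mapping.keys (y * x)"
  then obtain a b where s: "s = a + b" "b \<in> Poly_Mapping.keys x"
    using keys_mult[of y x] by blast
  then obtain i where "i \<in> C" "0 < Poly_Mapping.lookup b i"
    using assms unfolding HC_def by blast
  thus "\<exists>i\<in>C. 0 < Poly_Mapping.lookup s i" using s by (auto simp: lookup_add)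
qed

lemma HC_multR: "HC C x \<Longrightarrow> HC C (x * y)"
  using HC_multL[of C x y] by (simp add: mult.commute)

definition PC :: "nat set \<Rightarrow> nat set \<Rightarrow> 'k::field mpoly set" where
  "PC V C = {g \<in> polyring V. HC C g}"

lemma PC_prime: "prime_ideal V (PC V C :: 'k::field mpoly set)"
proof -
  have ideal: "is_ideal V (PC V C :: 'k mpoly set)"
    unfolding is_ideal_def PC_def
  proof (intro conjI ballI)
    show "0 \<in> {g \<in> polyring V. HC C (g::'k mpoly)}" by (simp add: HC_def)
  qed (auto intro: polyring_add polyring_mult HC_add HC_multL)
  have one: "(1 :: 'k mpoly) \<notin> PC V C"
    by (simp add: PC_def HC_def)
  have prime: "a \<in> PC V C \<or> b \<in> PC V C"
    if a: "a \<in> polyring V" and b: "b \<in> polyring V" and ab: "a * b \<in> PC V C" for a b :: "'k mpoly"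
  proof (rule ccontr)
    assume "\<not> (a \<in> PC V C \<or> b \<in> PC V C)"
    hence na: "\<not> HC C a" and nb: "\<not> HC C b" using a b by (auto simp: PC_def)
    define Z :: "(nat \<Rightarrow>\<^sub>0 nat) set" where "Z = {s. \<forall>i\<in>C. Poly_Mapping.lookup s i = 0}"
    have split: "\<exists>x0 x1. x = x0 + x1 \<and> x0 \<noteq> 0 \<and> Poly_Mapping.keys x0 \<subseteq> Z \<and> HC C x1"
      if "\<not> HC C x" for x :: "'k mpoly"
    proof -
      define x0 where "x0 = (\<Sum>s\<in>Poly_Mapping.keys x \<inter> Z. Poly_Mapping.single s (Poly_Mapping.lookup x s))"
      define x1 where "x1 = (\<Sum>s\<in>Poly_Mapping.keys x - Z. Poly_Mapping.single s (Poly_Mapping.lookup x s))"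
      have "x = (\<Sum>s\<in>Poly_Mapping.keys x. Poly_Mapping.single s (Poly_Mapping.lookup x s))"
        by (rule poly_expand)
      also have "\<dots> = x0 + x1"
        unfolding x0_def x1_def
        by (rule sum.Int_Diff) simp
      finally have e: "x = x0 + x1" .
      have k0: "Poly_Mapping.keys x0 = Poly_Mapping.keys x \<inter> Z"
        by (auto simp: x0_def in_keys_iff lookup_sum_single split: if_splits)
      have k1: "Poly_Mapping.keys x1 = Poly_Mapping.keys x - Z"
        by (auto simp: x1_def in_keys_iff lookup_sum_single split: if_splits)
      have "Poly_Mapping.keys x \<inter> Z \<noteq> {}"
        using that by (auto simp: HC_def Z_def)
      hence "x0 \<noteq> 0" using k0 by auto
      moreover have "HC C x1" using k1 by (auto simp: HC_def Z_def)
      ultimately show ?thesis using e k0 by blast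
    qed
    obtain a0 a1 where A: "a = a0 + a1" "a0 \<noteq> 0" "Poly_Mapping.keys a0 \<subseteq> Z" "HC C a1"
      using split[OF na] by blast
    obtain b0 b1 where B: "b = b0 + b1" "b0 \<noteq> 0" "Poly_Mapping.keys b0 \<subseteq> Z" "HC C b1"
      using split[OF nb] by blast
    define rest where "rest = a0 * b1 + a1 * b0 + a1 * b1"
    have ab_eq: "a * b = a0 * b0 + rest"
      by (simp add: A(1) B(1) rest_def algebra_simps)
    have hr: "HC C rest"
      unfolding rest_def using A(4) B(4) by (intro HC_add HC_multL HC_multR)
    have "a0 * b0 \<noteq> 0" using A(2) B(2) by simp
    then obtain k where k: "k \<in> Poly_Mapping.keys (a0 * b0)"
      by (metis all_not_in_conv keys_eq_empty)
    obtain k1 k2 where kk: "k = k1 + k2" "k1 \<in> Poly_Mapping.keys a0" "k2 \<in> Poly_Mapping.keys b0"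
      using keys_mult[of a0 b0] k by blast
    have kZ: "k \<in> Z"
      using kk A(3) B(3) by (auto simp: Z_def lookup_add)
    have "k \<notin> Poly_Mapping.keys rest"
      using hr kZ by (auto simp: HC_def Z_def)
    hence "Poly_Mapping.lookup (a * b) k = Poly_Mapping.lookup (a0 * b0) k"
      by (simp add: ab_eq lookup_add in_keys_iff)
    hence "k \<in> Poly_Mapping.keys (a * b)" using k by (simp add: in_keys_iff)
    thus False using ab kZ by (auto simp: PC_def HC_def Z_def)
  qed
  have "(1 :: 'k mpoly) \<in> polyring V" by (rule polyring_one)
  hence ne: "(PC V C :: 'k mpoly set) \<noteq> polyring V" using one by metis
  show ?thesis
    unfolding prime_ideal_def using ideal ne prime by blast
qed


lemma edges_okD:
  assumes "edges_ok V E" "{x,y} \<in> E"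
  shows "x \<noteq> y" "x \<in> V" "y \<in> V"
proof -
  obtain i j where "{x,y} = {i,j}" "i \<noteq> j" "i \<in> V" "j \<in> V"
    using assms unfolding edges_ok_def by blast
  thus "x \<noteq> y" "x \<in> V" "y \<in> V" by (auto simp: doubleton_eq_iff)
qed

lemma upper:
  assumes ok: "edges_ok V E" and w: "wit V E A" and fin: "finite A"
  shows "\<exists>f P. homog V (card A) f \<and> P \<in> ass V (edge_ideal V E :: 'k::field mpoly set)
            \<and> colon V (edge_ideal V E) f = P"
proof -
  define tA :: "nat \<Rightarrow>\<^sub>0 nat" where "tA = (\<Sum>a\<in>A. Poly_Mapping.single a 1)"
  have ltA: "Poly_Mapping.lookup tA i = (if i \<in> A then 1 else 0)" for i
    unfolding tA_def using fin by (rule lookup_sum_single)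
  have ktA: "Poly_Mapping.keys tA = A"
    by (auto simp: in_keys_iff ltA split: if_splits)
  have AV: "A \<subseteq> V" using w by (simp add: wit_def)
  have "mdeg tA = card A"
    unfolding mdeg_def ktA by (simp add: ltA)
  define f :: "'k mpoly" where "f = mon tA"
  have fpoly: "f \<in> polyring V" unfolding f_def using AV ktA by (intro polyring_single) auto
  have hom: "homog V (card A) f"
    unfolding homog_def using fpoly \<open>mdeg tA = card A\<close> by (simp add: f_def)
  define C where "C = nbr E A"
  have key: "divs E (tA + s) \<longleftrightarrow> (\<exists>i\<in>C. 0 < Poly_Mapping.lookup s i)" for s
  proof
    assume "divs E (tA + s)"
    then obtain i j where ij: "{i,j} \<in> E" "i \<noteq> j" "0 < Poly_Mapping.lookup (tA + s) i"
        "0 < Poly_Mapping.lookup (tA + s) j"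
      unfolding divs_def by blast
    have indep: "\<not> (i \<in> A \<and> j \<in> A)" using w ij(1) by (auto simp: wit_def)
    have cov: "i \<in> C \<or> j \<in> C" using w ij(1) by (auto simp: wit_def C_def)
    have ji: "{j,i} \<in> E" using ij(1) by (simp add: insert_commute)
    show "\<exists>i\<in>C. 0 < Poly_Mapping.lookup s i"
    proof (cases "i \<in> A")
      case True
      hence "j \<notin> A" using indep by blast
      hence "0 < Poly_Mapping.lookup s j" using ij(4) by (simp add: lookup_add ltA)
      moreover have "j \<in> C" using True ji unfolding C_def nbr_def by blast
      ultimately show ?thesis by blast
    next
      case False
      hence si: "0 < Poly_Mapping.lookup s i" using ij(3) by (simp add: lookup_add ltA)
      show ?thesis
      proof (cases "j \<in> A")
        case True
        hence "i \<in> C" using ij(1) unfolding C_def nbr_def by blast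
        thus ?thesis using si by blast
      next
        case False
        hence "0 < Poly_Mapping.lookup s j" using ij(4) by (simp add: lookup_add ltA)
        thus ?thesis using si cov by blast
      qed
    qed
  next
    assume "\<exists>i\<in>C. 0 < Poly_Mapping.lookup s i"
    then obtain i a where ia: "0 < Poly_Mapping.lookup s i" "a \<in> A" "{i,a} \<in> E"
      unfolding C_def nbr_def by blast
    have "i \<noteq> a" using edges_okD(1)[OF ok ia(3)] .
    thus "divs E (tA + s)"
      unfolding divs_def using ia by (intro exI[of _ i] exI[of _ a]) (auto simp: lookup_add ltA)
  qed
  have col: "colon V (edge_ideal V E) f = PC V C"
  proof (rule set_eqI)
    fix g :: "'k mpoly"
    have kg: "Poly_Mapping.keys (g * f) = (\<lambda>s. tA + s) ` Poly_Mapping.keys g"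
      by (simp add: f_def mult.commute[of g] keys_single_mult)
    show "g \<in> colon V (edge_ideal V E) f \<longleftrightarrow> g \<in> PC V C"
    proof (cases "g \<in> polyring V")
      case True
      hence "g * f \<in> polyring V" using fpoly by (rule polyring_mult)
      hence "g * f \<in> edge_ideal V E \<longleftrightarrow> (\<forall>s\<in>Poly_Mapping.keys g. divs E (tA + s))"
        using edge_ideal_iff[OF ok, of "g * f"] kg by auto
      thus ?thesis using True by (simp add: colon_def PC_def HC_def key)
    next
      case False
      thus ?thesis by (simp add: colon_def PC_def)
    qed
  qed
  have "PC V C \<in> ass V (edge_ideal V E :: 'k mpoly set)"
    unfolding ass_def using PC_prime[of V C] col fpoly by blast
  thus ?thesis using hom col by blast
qed


lemma prime_one_notin:
  assumes "prime_ideal V (P :: 'k::field mpoly set)"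
  shows "1 \<notin> P"
proof
  assume one: "1 \<in> P"
  have "polyring V \<subseteq> P"
  proof
    fix r :: "'k mpoly" assume "r \<in> polyring V"
    hence "r * 1 \<in> P" using one assms unfolding prime_ideal_def is_ideal_def by blast
    thus "r \<in> P" by simp
  qed
  moreover have "P \<subseteq> polyring V" using assms unfolding prime_ideal_def is_ideal_def by blast
  ultimately show False using assms unfolding prime_ideal_def by blast
qed

lemma polyring_prod: "(\<And>x. x \<in> S \<Longrightarrow> h x \<in> polyring V) \<Longrightarrow> prod h S \<in> polyring V"
  by (induction S rule: infinite_finite_induct) (auto intro: polyring_mult)

lemma prime_prod:
  assumes pr: "prime_ideal V (P :: 'k::field mpoly set)" and "finite S"
    and "\<And>s. s \<in> S \<Longrightarrow> h s \<in> polyring V" and "prod h S \<in> P"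
  shows "\<exists>s\<in>S. h s \<in> P"
  using assms(2-4)
proof (induction S rule: finite_induct)
  case empty
  thus ?case using prime_one_notin[OF pr] by simp
next
  case (insert x S)
  have "h x * prod h S \<in> P" using insert by simp
  moreover have "h x \<in> polyring V" "prod h S \<in> polyring V"
    using insert by (auto intro: polyring_prod)
  ultimately have "h x \<in> P \<or> prod h S \<in> P" using pr unfolding prime_ideal_def by blast
  thus ?case using insert by blast
qed

lemma mon_sum: "(mon (\<Sum>u\<in>S. w u) :: 'k::field mpoly) = (\<Prod>u\<in>S. mon (w u))"
proof (induction S rule: infinite_finite_induct)
  case (insert x F)
  have "(mon (w x + sum w F) :: 'k mpoly) = mon (w x) * mon (sum w F)"
    by (simp add: mult_single)
  thus ?case using insert by simp
qed auto

lemma divs_mono: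
  assumes "divs E t" "\<And>i. Poly_Mapping.lookup t i \<le> Poly_Mapping.lookup t' i"
  shows "divs E t'"
  using assms unfolding divs_def by (meson less_le_trans)

lemma lower:
  assumes ok: "edges_ok V E" and h: "homog V k f" and P: "P \<in> ass V (edge_ideal V E :: 'k::field mpoly set)"
    and c: "colon V (edge_ideal V E) f = P"
  shows "\<exists>A. wit V E A \<and> finite A \<and> card A \<le> k"
proof -
  have pr: "prime_ideal V P" using P by (simp add: ass_def)
  have fp: "f \<in> polyring V" and deg: "\<And>m. m \<in> Poly_Mapping.keys f \<Longrightarrow> mdeg m = k"
    using h by (auto simp: homog_def)
  have inP: "g \<in> P" if "g \<in> polyring V" "g * f \<in> edge_ideal V E" for g
    using that c by (auto simp: colon_def)
  have Pin: "g * f \<in> edge_ideal V E" if "g \<in> P" for g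
    using that c by (auto simp: colon_def)
  have one: "1 \<notin> P" by (rule prime_one_notin[OF pr])
  have "\<exists>u\<in>Poly_Mapping.keys f. \<forall>w. Poly_Mapping.keys w \<subseteq> V \<longrightarrow> divs E (w + u) \<longrightarrow> mon w \<in> P"
  proof (rule ccontr)
    assume "\<not> ?thesis"
    hence "\<forall>u\<in>Poly_Mapping.keys f. \<exists>w. Poly_Mapping.keys w \<subseteq> V \<and> divs E (w + u) \<and> mon w \<notin> P"
      by blast
    then obtain ww where ww: "\<And>u. u \<in> Poly_Mapping.keys f \<Longrightarrow>
        Poly_Mapping.keys (ww u) \<subseteq> V \<and> divs E (ww u + u) \<and> mon (ww u) \<notin> P"
      by metis
    define W where "W = (\<Sum>u\<in>Poly_Mapping.keys f. ww u)"
    have kW: "Poly_Mapping.keys W \<subseteq> V"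
      using keys_sum[of ww "Poly_Mapping.keys f"] ww unfolding W_def by blast
    have le: "Poly_Mapping.lookup (ww u) i \<le> Poly_Mapping.lookup W i" if "u \<in> Poly_Mapping.keys f" for u i
      unfolding W_def lookup_sum using that by (intro member_le_sum) auto
    have kWf: "Poly_Mapping.keys (mon W * f) = (\<lambda>s. W + s) ` Poly_Mapping.keys f"
      by (simp add: keys_single_mult)
    have "mon W * f \<in> edge_ideal V E"
      unfolding edge_ideal_iff[OF ok]
    proof
      show "mon W * f \<in> polyring V" using kW fp by (intro polyring_mult polyring_single)
      show "\<forall>t\<in>Poly_Mapping.keys (mon W * f). divs E t"
      proof
        fix t assume "t \<in> Poly_Mapping.keys (mon W * f)"
        then obtain s where s: "s \<in> Poly_Mapping.keys f" "t = W + s" using kWf by auto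
        show "divs E t"
          by (rule divs_mono[of E "ww s + s"]) (use ww[OF s(1)] le[OF s(1)] s(2) in \<open>auto simp: lookup_add\<close>)
      qed
    qed
    hence "mon W \<in> P" using kW by (intro inP polyring_single)
    hence "(\<Prod>u\<in>Poly_Mapping.keys f. mon (ww u)) \<in> P" by (simp add: W_def mon_sum)
    then obtain u where "u \<in> Poly_Mapping.keys f" "mon (ww u) \<in> P"
      using prime_prod[OF pr, of "Poly_Mapping.keys f" "\<lambda>u. mon (ww u)"] ww
      by (auto intro: polyring_single)
    thus False using ww by blast
  qed
  then obtain u where u: "u \<in> Poly_Mapping.keys f"
    and uP: "\<And>w. Poly_Mapping.keys w \<subseteq> V \<Longrightarrow> divs E (w + u) \<Longrightarrow> mon w \<in> P"
    by blast
  define A where "A = Poly_Mapping.keys u"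
  have nd: "\<not> divs E u"
  proof
    assume "divs E u"
    hence "mon 0 \<in> P" by (intro uP) auto
    thus False using one by simp
  qed
  have AV: "A \<subseteq> V" using fp u by (auto simp: polyring_def A_def)
  have indep: "\<forall>x\<in>A. \<forall>y\<in>A. {x,y} \<notin> E"
  proof (intro ballI notI)
    fix x y assume xy: "x \<in> A" "y \<in> A" "{x,y} \<in> E"
    hence "x \<noteq> y" using edges_okD[OF ok] by blast
    hence "divs E u" using xy unfolding divs_def A_def by (auto simp: in_keys_iff)
    thus False using nd by blast
  qed
  have nb: "z \<in> nbr E A" if zV: "z \<in> V" and zP: "var z \<in> P" for z
  proof -
    have "var z * f \<in> edge_ideal V E" by (rule Pin[OF zP])
    moreover have "Poly_Mapping.single z 1 + u \<in> Poly_Mapping.keys (var z * f :: 'k mpoly)"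
      using u by (simp add: var_def keys_single_mult)
    ultimately have "divs E (Poly_Mapping.single z 1 + u)"
      using edge_ideal_iff[OF ok] by blast
    then obtain i j where ij: "{i,j} \<in> E" "i \<noteq> j" "0 < Poly_Mapping.lookup (Poly_Mapping.single z 1 + u) i"
      "0 < Poly_Mapping.lookup (Poly_Mapping.single z 1 + u) j"
      unfolding divs_def by blast
    show ?thesis
    proof (cases "i = z")
      case True
      hence "j \<noteq> z" using ij by simp
      hence "j \<in> A" using ij(4) by (simp add: A_def in_keys_iff lookup_add lookup_single)
      thus ?thesis using ij(1) True unfolding nbr_def by blast
    next
      case False
      show ?thesis
      proof (cases "j = z")
        case True
        hence "i \<in> A" using ij(3) False by (simp add: A_def in_keys_iff lookup_add lookup_single)
        moreover have "{z,i} \<in> E" using ij(1) True by (simp add: insert_commute)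
        ultimately show ?thesis unfolding nbr_def by blast
      next
        case False2: False
        have "0 < Poly_Mapping.lookup u i" "0 < Poly_Mapping.lookup u j"
          using ij(3,4) False False2 by (auto simp: lookup_add lookup_single)
        hence "divs E u" using ij(1,2) unfolding divs_def by blast
        thus ?thesis using nd by blast
      qed
    qed
  qed
  have cover: "\<forall>x y. {x,y} \<in> E \<longrightarrow> x \<in> nbr E A \<or> y \<in> nbr E A"
  proof (intro allI impI)
    fix x y assume xy: "{x,y} \<in> E"
    have xyV: "x \<noteq> y" "x \<in> V" "y \<in> V" using edges_okD[OF ok xy] by auto
    define e :: "nat \<Rightarrow>\<^sub>0 nat" where "e = Poly_Mapping.single x 1 + Poly_Mapping.single y 1"
    have vv: "(var x * var y :: 'k mpoly) = mon e" by (simp add: e_def var_mult_var)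
    have vpoly: "(var x :: 'k mpoly) \<in> polyring V" "(var y :: 'k mpoly) \<in> polyring V"
      using xyV by (auto simp: var_def intro: polyring_single)
    have "mon e * f \<in> edge_ideal V E"
      unfolding edge_ideal_iff[OF ok]
    proof
      show "mon e * f \<in> polyring V"
        using xyV fp by (intro polyring_mult polyring_single) (auto simp: e_def keys_add_nat)
      have "divs E (e + s)" for s
        unfolding divs_def
        by (rule exI[of _ x], rule exI[of _ y]) (use xy xyV in \<open>auto simp: e_def lookup_add\<close>)
      thus "\<forall>t\<in>Poly_Mapping.keys (mon e * f). divs E t"
        by (auto simp: keys_single_mult)
    qed
    moreover have "(mon e :: 'k mpoly) \<in> polyring V"
      by (rule polyring_single) (use xyV in \<open>auto simp: e_def keys_add_nat\<close>)
    ultimately have "var x * var y \<in> P"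
      unfolding vv by (intro inP)
    hence "var x \<in> P \<or> var y \<in> P" using pr vpoly unfolding prime_ideal_def by blast
    thus "x \<in> nbr E A \<or> y \<in> nbr E A" using nb xyV by blast
  qed
  have w: "wit V E A" unfolding wit_def using AV indep cover by blast
  have "card A \<le> mdeg u"
    unfolding mdeg_def A_def
  proof -
    have "card (Poly_Mapping.keys u) = (\<Sum>i\<in>Poly_Mapping.keys u. (1::nat))" by simp
    also have "\<dots> \<le> (\<Sum>i\<in>Poly_Mapping.keys u. Poly_Mapping.lookup u i)"
      by (intro sum_mono) (auto simp: in_keys_iff)
    finally show "card (Poly_Mapping.keys u) \<le> (\<Sum>i\<in>Poly_Mapping.keys u. Poly_Mapping.lookup u i)" .
  qed
  hence "card A \<le> k" using deg[OF u] by simp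
  thus ?thesis using w by (auto simp: A_def)
qed


lemma gam_le: "wit V E A \<Longrightarrow> gam V E \<le> card A"
  unfolding gam_def by (rule Least_le) blast

lemma gam_wit: "\<exists>A. wit V E A \<Longrightarrow> \<exists>A. wit V E A \<and> card A = gam V E"
  unfolding gam_def by (rule LeastI_ex) blast

lemma v_graph_unfold: "v_graph TYPE('k::field) V E = (LEAST k. \<exists>f P. homog V k f
   \<and> P \<in> ass V (edge_ideal V E :: 'k mpoly set) \<and> colon V (edge_ideal V E) f = P)"
  by (simp only: v_graph_def v_number_def)

theorem v_graph_gam:
  assumes fin: "finite V" and ok: "edges_ok V E" and ex: "\<exists>A. wit V E A"
  shows "v_graph TYPE('k::field) V E = gam V E"
proof -
  define Q where "Q = (\<lambda>k. \<exists>f P. homog V k f \<and> P \<in> ass V (edge_ideal V E :: 'k mpoly set)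
            \<and> colon V (edge_ideal V E) f = P)"
  have v: "v_graph TYPE('k) V E = Least Q"
    by (simp only: v_graph_unfold Q_def)
  obtain A0 where A0: "wit V E A0" "card A0 = gam V E" using gam_wit[OF ex] by blast
  have "finite A0" using A0(1) fin by (auto simp: wit_def intro: finite_subset)
  then obtain f P where fP: "homog V (card A0) f" "P \<in> ass V (edge_ideal V E :: 'k mpoly set)"
      "colon V (edge_ideal V E) f = P"
    using upper[OF ok A0(1)] by blast
  have "Q (card A0)" unfolding Q_def using fP by blast
  hence Qg: "Q (gam V E)" by (simp only: A0(2))
  hence le1: "Least Q \<le> gam V E" by (rule Least_le)
  have "Q (Least Q)" using Qg by (rule LeastI)
  then obtain f' P' where fP': "homog V (Least Q) f'" "P' \<in> ass V (edge_ideal V E :: 'k mpoly set)"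
      "colon V (edge_ideal V E) f' = P'"
    unfolding Q_def by blast
  obtain A where "wit V E A" "card A \<le> Least Q"
    using lower[OF ok fP'] by blast
  hence "gam V E \<le> Least Q" using gam_le[of V E A] by linarith
  thus ?thesis using le1 v by simp
qed


lemma cycE: "{x,y} \<in> cycle_E n \<longleftrightarrow> (1 \<le> x \<and> x < n \<and> y = x+1) \<or> (1 \<le> y \<and> y < n \<and> x = y+1)
   \<or> (x = n \<and> y = 1) \<or> (x = 1 \<and> y = n)"
  unfolding cycle_E_def by (auto simp: doubleton_eq_iff)

lemma pathE: "{x,y} \<in> path_E k \<longleftrightarrow> (1 \<le> x \<and> x < k \<and> y = x+1) \<or> (1 \<le> y \<and> y < k \<and> x = y+1)"
  unfolding path_E_def by (auto simp: doubleton_eq_iff)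

lemma cpE: "{x,y} \<in> cp_E n m \<longleftrightarrow> {x,y} \<in> cycle_E n \<or> (n \<le> x \<and> x < n+m-1 \<and> y = x+1) \<or> (n \<le> y \<and> y < n+m-1 \<and> x = y+1)"
  unfolding cp_E_def by (auto simp: doubleton_eq_iff)

lemma edges_ok_cycle:
  assumes "n \<ge> 3" shows "edges_ok (cycle_V n) (cycle_E n)"
  unfolding edges_ok_def
proof
  fix e assume "e \<in> cycle_E n"
  hence "(\<exists>i. e = {i,i+1} \<and> 1 \<le> i \<and> i < n) \<or> e = {n,1}" by (auto simp: cycle_E_def)
  thus "\<exists>i j. e = {i, j} \<and> i \<noteq> j \<and> i \<in> cycle_V n \<and> j \<in> cycle_V n"
  proof
    assume "\<exists>i. e = {i,i+1} \<and> 1 \<le> i \<and> i < n"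
    then obtain i where "e = {i,i+1}" "1 \<le> i" "i < n" by blast
    thus ?thesis by (intro exI[of _ i] exI[of _ "i+1"]) (auto simp: cycle_V_def)
  next
    assume "e = {n,1}"
    thus ?thesis using assms by (intro exI[of _ n] exI[of _ 1]) (auto simp: cycle_V_def)
  qed
qed

lemma edges_ok_path: "edges_ok (path_V k) (path_E k)"
  unfolding edges_ok_def
proof
  fix e assume "e \<in> path_E k"
  then obtain i where "e = {i,i+1}" "1 \<le> i" "i < k" by (auto simp: path_E_def)
  thus "\<exists>i j. e = {i, j} \<and> i \<noteq> j \<and> i \<in> path_V k \<and> j \<in> path_V k"
    by (intro exI[of _ i] exI[of _ "i+1"]) (auto simp: path_V_def)
qed

lemma edges_ok_cp:
  assumes "n \<ge> 3" "m \<ge> 1" shows "edges_ok (cp_V n m) (cp_E n m)"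
  unfolding edges_ok_def
proof
  fix e assume "e \<in> cp_E n m"
  hence "(\<exists>i. e = {i,i+1} \<and> 1 \<le> i \<and> i < n) \<or> e = {n,1} \<or> (\<exists>i. e = {i,i+1} \<and> n \<le> i \<and> i < n + m - 1)"
    by (auto simp: cp_E_def cycle_E_def)
  thus "\<exists>i j. e = {i, j} \<and> i \<noteq> j \<and> i \<in> cp_V n m \<and> j \<in> cp_V n m"
  proof (elim disjE)
    assume "\<exists>i. e = {i,i+1} \<and> 1 \<le> i \<and> i < n"
    then obtain i where "e = {i,i+1}" "1 \<le> i" "i < n" by blast
    thus ?thesis using assms by (intro exI[of _ i] exI[of _ "i+1"]) (auto simp: cp_V_def)
  next
    assume "\<exists>i. e = {i,i+1} \<and> n \<le> i \<and> i < n + m - 1"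
    then obtain i where "e = {i,i+1}" "n \<le> i" "i < n + m - 1" by blast
    thus ?thesis using assms by (intro exI[of _ i] exI[of _ "i+1"]) (auto simp: cp_V_def)
  next
    assume "e = {n,1}"
    thus ?thesis using assms by (intro exI[of _ n] exI[of _ 1]) (auto simp: cp_V_def)
  qed
qed

lemma wit_exists:
  assumes fin: "finite V" and ok: "edges_ok V E"
  shows "\<exists>A. wit V E A"
proof -
  define S where "S = {A. A \<subseteq> V \<and> (\<forall>x\<in>A. \<forall>y\<in>A. {x,y} \<notin> E)}"
  have "finite S" unfolding S_def using fin by (simp add: finite_subset[of _ "Pow V"] subset_eq)
  moreover have "{} \<in> S" by (simp add: S_def)
  ultimately have "Max (card ` S) \<in> card ` S" by (intro Max_in) auto
  then obtain A where A: "A \<in> S" "card A = Max (card ` S)" by auto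
  have maxA: "card B \<le> card A" if "B \<in> S" for B
    using A(2) \<open>finite S\<close> that by (simp add: Max_ge)
  have finA: "finite A" using A(1) fin by (auto simp: S_def intro: finite_subset)
  have inA: "x \<in> A \<or> x \<in> nbr E A" if "x \<in> V" for x
  proof (rule ccontr)
    assume "\<not> (x \<in> A \<or> x \<in> nbr E A)"
    hence nx: "x \<notin> A" "\<forall>a\<in>A. {x,a} \<notin> E" by (auto simp: nbr_def)
    have "{x,x} \<notin> E" using edges_okD(1)[OF ok, of x x] by blast
    hence "insert x A \<in> S" using A(1) nx that
      by (auto simp: S_def insert_commute)
    hence "card (insert x A) \<le> card A" by (rule maxA)
    thus False using nx(1) finA by simp
  qed
  have "wit V E A"
    unfolding wit_def
  proof (intro conjI allI impI)
    show "A \<subseteq> V" "\<forall>x\<in>A. \<forall>y\<in>A. {x, y} \<notin> E" using A(1) by (auto simp: S_def)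
    fix x y assume xy: "{x,y} \<in> E"
    have "x \<in> V" "y \<in> V" using edges_okD[OF ok xy] by auto
    moreover have "\<not> (x \<in> A \<and> y \<in> A)" using A(1) xy by (auto simp: S_def)
    ultimately show "x \<in> nbr E A \<or> y \<in> nbr E A" using inA by blast
  qed
  thus ?thesis by blast
qed

lemma wit_transfer:
  assumes w: "wit V E A" and fV: "\<forall>x\<in>V. f x \<in> V'" and surj: "\<forall>y\<in>V'. \<exists>x\<in>V. f x = y"
    and adj: "\<forall>x\<in>V. \<forall>y\<in>V. ({f x, f y} \<in> E' \<longleftrightarrow> {x,y} \<in> E)"
    and E'V: "\<forall>x y. {x,y} \<in> E' \<longrightarrow> x \<in> V' \<and> y \<in> V'"
    and EV: "\<forall>x y. {x,y} \<in> E \<longrightarrow> x \<in> V \<and> y \<in> V"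
  shows "wit V' E' (f ` A)"
  unfolding wit_def
proof (intro conjI allI impI ballI)
  have AV: "A \<subseteq> V" using w by (simp add: wit_def)
  show "f ` A \<subseteq> V'" using AV fV by auto
  fix x' y'
  { assume "x' \<in> f ` A" "y' \<in> f ` A"
    then obtain x y where xy: "x \<in> A" "y \<in> A" "x' = f x" "y' = f y" by blast
    have "{f x, f y} \<in> E' \<longleftrightarrow> {x,y} \<in> E" using adj AV xy by blast
    thus "{x', y'} \<notin> E'" using w xy by (auto simp: wit_def) }
  { assume e: "{x', y'} \<in> E'"
    then obtain x y where xy: "x \<in> V" "y \<in> V" "x' = f x" "y' = f y" using E'V surj by metis
    hence "{x,y} \<in> E" using adj e by auto
    hence "x \<in> nbr E A \<or> y \<in> nbr E A" using w by (simp add: wit_def)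
    moreover have "f z \<in> nbr E' (f ` A)" if zA: "z \<in> nbr E A" for z
    proof -
      obtain a where a: "a \<in> A" "{z,a} \<in> E" using zA by (auto simp: nbr_def)
      hence "z \<in> V" "a \<in> V" using EV by auto
      hence "{f z, f a} \<in> E'" using adj a by auto
      thus ?thesis using a unfolding nbr_def by blast
    qed
    ultimately show "x' \<in> nbr E' (f ` A) \<or> y' \<in> nbr E' (f ` A)" using xy by blast }
qed


lemma cycE_bounds: "{x,y} \<in> cycle_E n \<Longrightarrow> n \<ge> 1 \<Longrightarrow> 1 \<le> x \<and> x \<le> n \<and> 1 \<le> y \<and> y \<le> n"
  unfolding cycE by auto

lemma pathE_bounds: "{x,y} \<in> path_E k \<Longrightarrow> 1 \<le> x \<and> x \<le> k \<and> 1 \<le> y \<and> y \<le> k"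
  unfolding pathE by auto

lemma cpE_low: "{x,y} \<in> cp_E n m \<Longrightarrow> x \<le> n \<Longrightarrow> y \<le> n \<Longrightarrow> {x,y} \<in> cycle_E n"
  unfolding cpE by auto

lemma cpE_cross: "{x,y} \<in> cp_E n m \<Longrightarrow> n \<ge> 1 \<Longrightarrow> x \<le> n \<Longrightarrow> y > n \<Longrightarrow> x = n \<and> y = n+1"
  unfolding cpE cycE by auto

lemma cpE_high: "{x,y} \<in> cp_E n m \<Longrightarrow> n \<ge> 1 \<Longrightarrow> x > n \<Longrightarrow>
    (y = x+1 \<and> x < n+m-1) \<or> (x = y+1 \<and> y \<ge> n)"
  unfolding cpE cycE by auto

lemma cpE_path: "n \<le> x \<Longrightarrow> x < n+m-1 \<Longrightarrow> {x, x+1} \<in> cp_E n m \<and> {x+1, x} \<in> cp_E n m"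
  unfolding cpE by auto

lemma cpE_cyc: "{x,y} \<in> cycle_E n \<Longrightarrow> {x,y} \<in> cp_E n m"
  unfolding cpE by auto

lemma shiftP: "{i,j} \<in> path_E (m-2) \<Longrightarrow> m \<ge> 3 \<Longrightarrow> {i+n+1, j+n+1} \<in> cp_E n m"
  unfolding cpE pathE by auto

lemma unshift: "{x,y} \<in> cp_E n m \<Longrightarrow> n \<ge> 1 \<Longrightarrow> x \<ge> n+2 \<Longrightarrow> y \<ge> n+2 \<Longrightarrow>
    {x-(n+1), y-(n+1)} \<in> path_E (m-2)"
  unfolding cpE cycE pathE by auto

lemma nbrI: "a \<in> A \<Longrightarrow> {x,a} \<in> E \<Longrightarrow> x \<in> nbr E A"
  unfolding nbr_def by blast

lemma nbrE: "x \<in> nbr E A \<Longrightarrow> (\<And>a. a \<in> A \<Longrightarrow> {x,a} \<in> E \<Longrightarrow> P) \<Longrightarrow> P"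
  unfolding nbr_def by blast


lemma nbr_mono: "A \<subseteq> B \<Longrightarrow> nbr E A \<subseteq> nbr E B"
  unfolding nbr_def by blast

lemma partB:
  assumes n: "n \<ge> 3" and m: "m \<ge> 3"
  shows "gam (cycle_V n) (cycle_E n) + gam (path_V (m-2)) (path_E (m-2)) \<le> gam (cp_V n m) (cp_E n m) + 1"
proof -
  define k where "k = m - 2"
  have k1: "k \<ge> 1" and nmk: "n + m - 1 = n + k + 1" using m by (auto simp: k_def)
  have n1: "n \<ge> 1" using n by simp
  obtain A where A: "wit (cp_V n m) (cp_E n m) A" "card A = gam (cp_V n m) (cp_E n m)"
  proof -
    have "\<exists>A. wit (cp_V n m) (cp_E n m) A"
      by (rule wit_exists) (use n m edges_ok_cp[of n m] in \<open>auto simp: cp_V_def\<close>)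
    thus ?thesis using gam_wit that by blast
  qed
  have Asub: "A \<subseteq> {1..n+m-1}" using A(1) by (simp add: wit_def cp_V_def)
  have finA: "finite A" using Asub finite_subset by blast
  have indH: "\<And>x y. x \<in> A \<Longrightarrow> y \<in> A \<Longrightarrow> {x,y} \<notin> cp_E n m" using A(1) by (simp add: wit_def)
  have covH: "\<And>x y. {x,y} \<in> cp_E n m \<Longrightarrow> x \<in> nbr (cp_E n m) A \<or> y \<in> nbr (cp_E n m) A"
    using A(1) by (simp add: wit_def)
  define AC where "AC = A \<inter> {1..n}"
  define B where "B = A \<inter> {n+2..n+m-1}"
  define AP where "AP = (\<lambda>x. x - (n+1)) ` B"
  define AC2 where "AC2 = (if n \<in> nbr (cycle_E n) AC then AC else insert n AC)"
  define AP2 where "AP2 = (if 1 \<in> nbr (path_E k) AP then AP else insert 1 AP)"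
  have subC: "z \<in> nbr (cycle_E n) AC \<or> (z = n \<and> n+1 \<in> A)"
    if zn: "z \<le> n" and zN: "z \<in> nbr (cp_E n m) A" for z
  proof -
    obtain a where a: "a \<in> A" "{z,a} \<in> cp_E n m" using zN by (rule nbrE)
    show ?thesis
    proof (cases "a \<le> n")
      case True
      hence "{z,a} \<in> cycle_E n" using cpE_low[OF a(2) zn] by simp
      moreover have "a \<in> AC" using True a(1) Asub by (auto simp: AC_def)
      ultimately show ?thesis by (blast intro: nbrI)
    next
      case False
      thus ?thesis using cpE_cross[OF a(2) n1 zn] a(1) by auto
    qed
  qed
  have covC: "x \<in> nbr (cycle_E n) AC \<or> y \<in> nbr (cycle_E n) AC \<or> (n+1 \<in> A \<and> (x = n \<or> y = n))"
    if xy: "{x,y} \<in> cycle_E n" for x y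
  proof -
    have b: "x \<le> n" "y \<le> n" using cycE_bounds[OF xy n1] by auto
    have "x \<in> nbr (cp_E n m) A \<or> y \<in> nbr (cp_E n m) A" using covH[OF cpE_cyc[OF xy]] .
    thus ?thesis using subC b by blast
  qed
  have indC: "{x,y} \<notin> cycle_E n" if "x \<in> AC" "y \<in> AC" for x y
    using indH[of x y] that cpE_cyc[of x y n m] by (auto simp: AC_def)
  have ACsub: "AC \<subseteq> cycle_V n" by (auto simp: AC_def cycle_V_def)
  have nn: "{n,n} \<notin> cycle_E n" using n cycE[of n n n] by auto
  have witC2: "wit (cycle_V n) (cycle_E n) AC2"
    unfolding wit_def
  proof (intro conjI ballI allI impI)
    show "AC2 \<subseteq> cycle_V n" using ACsub n by (auto simp: AC2_def cycle_V_def)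
  next
    fix x y assume xy: "x \<in> AC2" "y \<in> AC2"
    show "{x,y} \<notin> cycle_E n"
    proof (cases "n \<in> nbr (cycle_E n) AC")
      case True thus ?thesis using xy indC by (simp add: AC2_def)
    next
      case False
      hence "x \<in> insert n AC" "y \<in> insert n AC" using xy by (auto simp: AC2_def)
      thus ?thesis using indC nn False by (auto simp: insert_commute intro: nbrI)
    qed
  next
    fix x y assume xy: "{x,y} \<in> cycle_E n"
    have yx: "{y,x} \<in> cycle_E n" using xy by (simp add: insert_commute)
    have mono: "nbr (cycle_E n) AC \<subseteq> nbr (cycle_E n) AC2"
      by (rule nbr_mono) (auto simp: AC2_def)
    show "x \<in> nbr (cycle_E n) AC2 \<or> y \<in> nbr (cycle_E n) AC2"
    proof (cases "n \<in> nbr (cycle_E n) AC")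
      case True
      thus ?thesis using covC[OF xy] mono by blast
    next
      case False
      hence nA: "n \<in> AC2" by (simp add: AC2_def)
      have "x = n \<Longrightarrow> y \<in> nbr (cycle_E n) AC2" using nbrI[of n AC2 y] nA yx by blast
      moreover have "y = n \<Longrightarrow> x \<in> nbr (cycle_E n) AC2" using nbrI[of n AC2 x] nA xy by blast
      ultimately show ?thesis using covC[OF xy] mono by blast
    qed
  qed
  have witC1: "wit (cycle_V n) (cycle_E n) AC" if "n+1 \<notin> A"
    unfolding wit_def using ACsub indC covC that by blast
  have Bge: "\<And>x. x \<in> B \<Longrightarrow> n+2 \<le> x \<and> x \<le> n+m-1" by (auto simp: B_def)
  have APsub: "AP \<subseteq> path_V k" using Bge by (force simp: AP_def path_V_def k_def)
  have subP: "z \<in> nbr (path_E k) AP \<or> (z = 1 \<and> n+1 \<in> A)"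
    if z: "1 \<le> z" "z \<le> k" "z+n+1 \<in> nbr (cp_E n m) A" for z
  proof -
    obtain a where a: "a \<in> A" "{z+n+1,a} \<in> cp_E n m" using z(3) by (rule nbrE)
    have h: "(a = z+n+1+1 \<and> z+n+1 < n+m-1) \<or> (z+n+1 = a+1 \<and> a \<ge> n)"
      using cpE_high[OF a(2) n1] by simp
    show ?thesis
    proof (cases "a \<ge> n+2")
      case True
      hence aB: "a \<in> B" using a(1) Asub by (auto simp: B_def)
      hence "a - (n+1) \<in> AP" by (auto simp: AP_def)
      moreover have "{z+n+1-(n+1), a-(n+1)} \<in> path_E (m-2)"
        using unshift[OF a(2) n1] True z(1) by simp
      ultimately show ?thesis by (auto simp: k_def intro: nbrI)
    next
      case False
      hence "a = n+1 \<and> z = 1" using h z(1) by auto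
      thus ?thesis using a(1) by auto
    qed
  qed
  have covP: "i \<in> nbr (path_E k) AP \<or> j \<in> nbr (path_E k) AP \<or> (n+1 \<in> A \<and> (i = 1 \<or> j = 1))"
    if ij: "{i,j} \<in> path_E k" for i j
  proof -
    have b: "1 \<le> i" "i \<le> k" "1 \<le> j" "j \<le> k" using pathE_bounds[OF ij] by auto
    have "{i+n+1, j+n+1} \<in> cp_E n m" using shiftP[of i j m n] ij m by (simp add: k_def)
    hence "i+n+1 \<in> nbr (cp_E n m) A \<or> j+n+1 \<in> nbr (cp_E n m) A" by (rule covH)
    thus ?thesis using subP b by blast
  qed
  have indP: "{i,j} \<notin> path_E k" if ijAP: "i \<in> AP" "j \<in> AP" for i j
  proof
    assume ij: "{i,j} \<in> path_E k"
    obtain x y where xy: "x \<in> B" "y \<in> B" "i = x - (n+1)" "j = y - (n+1)"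
      using ijAP by (auto simp: AP_def)
    have "i + n + 1 = x" "j + n + 1 = y" using xy Bge by force+
    hence "{x,y} \<in> cp_E n m" using shiftP[of i j m n] ij m by (simp add: k_def)
    thus False using indH xy by (auto simp: B_def)
  qed
  have one: "{1,1} \<notin> path_E k" using pathE[of 1 1 k] by auto
  have witP2: "wit (path_V k) (path_E k) AP2"
    unfolding wit_def
  proof (intro conjI ballI allI impI)
    show "AP2 \<subseteq> path_V k" using APsub k1 by (auto simp: AP2_def path_V_def)
  next
    fix x y assume xy: "x \<in> AP2" "y \<in> AP2"
    show "{x,y} \<notin> path_E k"
    proof (cases "1 \<in> nbr (path_E k) AP")
      case True thus ?thesis using xy indP by (simp add: AP2_def)
    next
      case False
      hence "x \<in> insert 1 AP" "y \<in> insert 1 AP" using xy by (auto simp: AP2_def)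
      thus ?thesis using indP one False by (auto simp: insert_commute intro: nbrI)
    qed
  next
    fix x y assume xy: "{x,y} \<in> path_E k"
    have yx: "{y,x} \<in> path_E k" using xy by (simp add: insert_commute)
    have mono: "nbr (path_E k) AP \<subseteq> nbr (path_E k) AP2"
      by (rule nbr_mono) (auto simp: AP2_def)
    show "x \<in> nbr (path_E k) AP2 \<or> y \<in> nbr (path_E k) AP2"
    proof (cases "1 \<in> nbr (path_E k) AP")
      case True
      thus ?thesis using covP[OF xy] mono by blast
    next
      case False
      hence nA: "1 \<in> AP2" by (simp add: AP2_def)
      have "x = 1 \<Longrightarrow> y \<in> nbr (path_E k) AP2" using nbrI[of 1 AP2 y] nA yx by blast
      moreover have "y = 1 \<Longrightarrow> x \<in> nbr (path_E k) AP2" using nbrI[of 1 AP2 x] nA xy by blast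
      ultimately show ?thesis using covP[OF xy] mono by blast
    qed
  qed
  have witP1: "wit (path_V k) (path_E k) AP" if "n+1 \<notin> A"
    unfolding wit_def using APsub indP covP that by blast
  have finB: "finite B" "finite AC" using finA by (auto simp: B_def AC_def)
  have "inj_on (\<lambda>x. x - (n+1)) B"
    by (rule inj_onI) (use Bge in force)
  hence cAP: "card AP = card B" by (simp add: AP_def card_image)
  have Aeq: "A = (AC \<union> B) \<union> (A \<inter> {n+1})"
    using Asub by (auto simp: AC_def B_def)
  have cA: "card A = card AC + card B + card (A \<inter> {n+1})"
  proof -
    have "card A = card (AC \<union> B) + card (A \<inter> {n+1})"
      by (subst Aeq, rule card_Un_disjoint) (use finA finB in \<open>auto simp: AC_def B_def\<close>)
    also have "card (AC \<union> B) = card AC + card B"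
      by (rule card_Un_disjoint) (use finB in \<open>auto simp: AC_def B_def\<close>)
    finally show ?thesis .
  qed
  have cAC2: "card AC2 \<le> card AC + 1" using finB by (simp add: AC2_def card_insert_le_m1 card_insert_if)
  have cAP2: "card AP2 \<le> card AP + 1"
    using finB by (simp add: AP2_def AP_def card_insert_if)
  show ?thesis
  proof (cases "n+1 \<in> A")
    case True
    have "card (A \<inter> {n+1}) = 1" using True by (simp add: Int_absorb1)
    moreover have "gam (cycle_V n) (cycle_E n) \<le> card AC2" by (rule gam_le[OF witC2])
    moreover have "gam (path_V k) (path_E k) \<le> card AP2" by (rule gam_le[OF witP2])
    ultimately show ?thesis using cA A(2) cAC2 cAP2 cAP by (simp add: k_def)
  next
    case False
    have "card (A \<inter> {n+1}) = 0" using False by simp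
    moreover have "gam (cycle_V n) (cycle_E n) \<le> card AC" by (rule gam_le[OF witC1[OF False]])
    moreover have "gam (path_V k) (path_E k) \<le> card AP" by (rule gam_le[OF witP1[OF False]])
    ultimately show ?thesis using cA A(2) cAP by (simp add: k_def)
  qed
qed


lemma partA:
  assumes n: "n \<ge> 3" and m: "m \<ge> 3"
  shows "gam (cp_V n m) (cp_E n m) \<le> gam (cycle_V n) (cycle_E n) + gam (path_V (m-2)) (path_E (m-2))"
proof -
  define k where "k = m - 2"
  have k1: "k \<ge> 1" and nmk: "n + m - 1 = n + k + 1" using m by (auto simp: k_def)
  have n1: "n \<ge> 1" using n by simp
  obtain A1 where A1: "wit (cycle_V n) (cycle_E n) A1" "card A1 = gam (cycle_V n) (cycle_E n)"
  proof -
    have "\<exists>A. wit (cycle_V n) (cycle_E n) A"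
      by (rule wit_exists) (use n edges_ok_cycle[of n] in \<open>auto simp: cycle_V_def\<close>)
    thus ?thesis using gam_wit that by blast
  qed
  obtain A2 where A2: "wit (path_V k) (path_E k) A2" "card A2 = gam (path_V k) (path_E k)"
  proof -
    have "\<exists>A. wit (path_V k) (path_E k) A"
      by (rule wit_exists) (use edges_ok_path[of k] in \<open>auto simp: path_V_def\<close>)
    thus ?thesis using gam_wit that by blast
  qed
  have A1sub: "A1 \<subseteq> {1..n}" using A1(1) by (simp add: wit_def cycle_V_def)
  have A2sub: "A2 \<subseteq> {1..k}" using A2(1) by (simp add: wit_def path_V_def)
  have "{1,2} \<in> cycle_E n" using n cycE[of 1 2 n] by simp
  hence "1 \<in> nbr (cycle_E n) A1 \<or> 2 \<in> nbr (cycle_E n) A1" using A1(1) by (simp add: wit_def)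
  then obtain a where a: "a \<in> A1" by (auto simp: nbr_def)
  have a1: "1 \<le> a" "a \<le> n" using a A1sub by auto
  define g where "g x = (if x \<le> a then x + n - a else x - a)" for x
  have gV: "\<forall>x\<in>cycle_V n. g x \<in> cycle_V n"
    using a1 by (auto simp: g_def cycle_V_def)
  have gsurj: "\<forall>y\<in>cycle_V n. \<exists>x\<in>cycle_V n. g x = y"
  proof
    fix y assume y: "y \<in> cycle_V n"
    show "\<exists>x\<in>cycle_V n. g x = y"
    proof (cases "y \<le> n - a")
      case True
      thus ?thesis using y a1 by (intro bexI[of _ "y + a"]) (auto simp: g_def cycle_V_def)
    next
      case False
      thus ?thesis using y a1 by (intro bexI[of _ "y + a - n"]) (auto simp: g_def cycle_V_def)
    qed
  qed
  have gadj: "\<forall>x\<in>cycle_V n. \<forall>y\<in>cycle_V n. ({g x, g y} \<in> cycle_E n \<longleftrightarrow> {x,y} \<in> cycle_E n)"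
    unfolding cycE using a1 n by (auto simp: g_def cycle_V_def)
  have EV: "\<forall>x y. {x,y} \<in> cycle_E n \<longrightarrow> x \<in> cycle_V n \<and> y \<in> cycle_V n"
    using cycE_bounds n1 by (auto simp: cycle_V_def)
  have w1: "wit (cycle_V n) (cycle_E n) (g ` A1)"
    by (rule wit_transfer[OF A1(1) gV gsurj gadj EV EV])
  have ginj: "inj_on g (cycle_V n)"
    by (rule inj_onI) (use a1 in \<open>auto simp: g_def cycle_V_def split: if_splits\<close>)
  have cA1: "card (g ` A1) = card A1"
    by (rule card_image, rule inj_on_subset[OF ginj]) (use A1sub in \<open>auto simp: cycle_V_def\<close>)
  define A1' where "A1' = g ` A1"
  have nA1: "n \<in> A1'" using a a1 by (auto simp: A1'_def g_def intro!: image_eqI[of _ _ a])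
  have A1'sub: "A1' \<subseteq> {1..n}" using w1 by (simp add: A1'_def wit_def cycle_V_def)
  have ind1: "\<And>x y. x \<in> A1' \<Longrightarrow> y \<in> A1' \<Longrightarrow> {x,y} \<notin> cycle_E n"
    using w1 unfolding A1'_def wit_def by blast
  have cov1: "\<And>x y. {x,y} \<in> cycle_E n \<Longrightarrow> x \<in> nbr (cycle_E n) A1' \<or> y \<in> nbr (cycle_E n) A1'"
    using w1 by (simp add: A1'_def wit_def)
  have ind2: "\<And>x y. x \<in> A2 \<Longrightarrow> y \<in> A2 \<Longrightarrow> {x,y} \<notin> path_E k"
    using A2(1) by (simp add: wit_def)
  have cov2: "\<And>x y. {x,y} \<in> path_E k \<Longrightarrow> x \<in> nbr (path_E k) A2 \<or> y \<in> nbr (path_E k) A2"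
    using A2(1) by (simp add: wit_def)
  define A2' where "A2' = (\<lambda>j. j + n + 1) ` A2"
  have cA2: "card A2' = card A2" unfolding A2'_def by (rule card_image) (auto simp: inj_on_def)
  have A2'sub: "\<And>x. x \<in> A2' \<Longrightarrow> n + 2 \<le> x \<and> x \<le> n + m - 1"
    using A2sub nmk by (auto simp: A2'_def)
  define A where "A = A1' \<union> A2'"
  have Acases: "\<And>x. x \<in> A \<Longrightarrow> (x \<in> A1' \<and> 1 \<le> x \<and> x \<le> n) \<or> (x \<in> A2' \<and> n+2 \<le> x \<and> x \<le> n+m-1)"
    using A1'sub A2'sub by (auto simp: A_def)
  have shiftH: "{i + n + 1, b + n + 1} \<in> cp_E n m" if ib: "{i,b} \<in> path_E k" for i b
    using shiftP[of i b m n] ib m by (simp add: k_def)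
  have unsh: "x - (n+1) \<in> A2" if "x \<in> A2'" for x
    using that by (auto simp: A2'_def)
  have witH: "wit (cp_V n m) (cp_E n m) A"
    unfolding wit_def
  proof (intro conjI ballI allI impI)
    show "A \<subseteq> cp_V n m"
    proof
      fix x assume "x \<in> A"
      thus "x \<in> cp_V n m" using Acases[of x] m unfolding cp_V_def by auto
    qed
  next
    fix x y assume xy: "x \<in> A" "y \<in> A"
    show "{x,y} \<notin> cp_E n m"
    proof
      assume e: "{x,y} \<in> cp_E n m"
      have e': "{y,x} \<in> cp_E n m" using e by (simp add: insert_commute)
      show False
        using Acases[OF xy(1)] Acases[OF xy(2)]
      proof (elim disjE conjE)
        assume "x \<in> A1'" "x \<le> n" "y \<in> A1'" "y \<le> n"
        thus False using cpE_low[OF e] ind1 by blast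
      next
        assume "x \<le> n" "n + 2 \<le> y"
        thus False using cpE_cross[OF e n1] by auto
      next
        assume "y \<le> n" "n + 2 \<le> x"
        thus False using cpE_cross[OF e' n1] by auto
      next
        assume h: "x \<in> A2'" "y \<in> A2'" "n + 2 \<le> x" "n + 2 \<le> y"
        have "{x-(n+1), y-(n+1)} \<in> path_E k" using unshift[OF e n1] h by (simp add: k_def)
        thus False using ind2 unsh h by blast
      qed
    qed
  next
    have nbrmono: "nbr (cycle_E n) A1' \<subseteq> nbr (cp_E n m) A"
      unfolding nbr_def A_def using cpE_cyc by blast
    have nA: "n \<in> A" using nA1 by (simp add: A_def)
    have pcov: "z \<in> nbr (cp_E n m) A \<or> z + 1 \<in> nbr (cp_E n m) A"
      if z: "n \<le> z" "z < n + m - 1" for z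
    proof (cases "z \<le> n + 1")
      case True
      have "{n+1, n} \<in> cp_E n m" using cpE_path[of n n m] m by simp
      hence "n + 1 \<in> nbr (cp_E n m) A" using nA by (rule nbrI[rotated])
      moreover have "z = n \<or> z = n + 1" using True z by auto
      ultimately show ?thesis by auto
    next
      case False
      define i where "i = z - (n+1)"
      have i: "1 \<le> i" "i < k" "z = i + n + 1" using False z nmk by (auto simp: i_def)
      have "{i, i+1} \<in> path_E k" using i pathE[of i "i+1" k] by simp
      hence "i \<in> nbr (path_E k) A2 \<or> i + 1 \<in> nbr (path_E k) A2" by (rule cov2)
      moreover have "j + n + 1 \<in> nbr (cp_E n m) A" if jN: "j \<in> nbr (path_E k) A2" for j
      proof -
        obtain b where b: "b \<in> A2" "{j,b} \<in> path_E k" using jN by (rule nbrE)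
        have "b + n + 1 \<in> A" using b(1) by (auto simp: A_def A2'_def)
        thus ?thesis using shiftH[OF b(2)] by (rule nbrI)
      qed
      ultimately have "i + n + 1 \<in> nbr (cp_E n m) A \<or> (i + 1) + n + 1 \<in> nbr (cp_E n m) A"
        by blast
      moreover have "z + 1 = (i + 1) + n + 1" using i(3) by simp
      ultimately show ?thesis using i(3) by metis
    qed
    fix x y assume e: "{x,y} \<in> cp_E n m"
    hence "{x,y} \<in> cycle_E n \<or> (n \<le> x \<and> x < n+m-1 \<and> y = x+1) \<or> (n \<le> y \<and> y < n+m-1 \<and> x = y+1)"
      by (simp add: cpE)
    thus "x \<in> nbr (cp_E n m) A \<or> y \<in> nbr (cp_E n m) A"
    proof (elim disjE)
      assume "{x,y} \<in> cycle_E n"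
      thus ?thesis using cov1 nbrmono by blast
    next
      assume "n \<le> x \<and> x < n+m-1 \<and> y = x+1"
      thus ?thesis using pcov by blast
    next
      assume "n \<le> y \<and> y < n+m-1 \<and> x = y+1"
      thus ?thesis using pcov by blast
    qed
  qed
  have fin: "finite A1'" "finite A2'" using A1'sub A2sub by (auto simp: A2'_def intro: finite_subset)
  have "card A = card A1' + card A2'"
    unfolding A_def by (rule card_Un_disjoint) (use fin A1'sub A2'sub in force)+
  hence "card A = gam (cycle_V n) (cycle_E n) + gam (path_V k) (path_E k)"
    using cA1 cA2 A1(2) A2(2) by (simp add: A1'_def)
  thus ?thesis using gam_le[OF witH] by (simp add: k_def)
qed


theorem proposition3p7:
  fixes n m :: nat
  assumes "n \<ge> 3" and "m \<ge> 3"
  shows "v_graph TYPE('k::field) (cycle_V n) (cycle_E n) + v_graph TYPE('k) (path_V (m - 2)) (path_E (m - 2))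
           \<le> v_graph TYPE('k) (cp_V n m) (cp_E n m) + 1
       \<and> v_graph TYPE('k) (cp_V n m) (cp_E n m)
           \<le> v_graph TYPE('k) (cycle_V n) (cycle_E n) + v_graph TYPE('k) (path_V (m - 2)) (path_E (m - 2))"
proof -
  have okC: "edges_ok (cycle_V n) (cycle_E n)" using assms(1) by (rule edges_ok_cycle)
  have okP: "edges_ok (path_V (m-2)) (path_E (m-2))" by (rule edges_ok_path)
  have okH: "edges_ok (cp_V n m) (cp_E n m)" using assms by (intro edges_ok_cp) auto
  have fC: "finite (cycle_V n)" by (simp add: cycle_V_def)
  have fP: "finite (path_V (m-2))" by (simp add: path_V_def)
  have fH: "finite (cp_V n m)" by (simp add: cp_V_def)
  have vC: "v_graph TYPE('k) (cycle_V n) (cycle_E n) = gam (cycle_V n) (cycle_E n)"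
    using fC okC wit_exists[OF fC okC] by (rule v_graph_gam)
  have vP: "v_graph TYPE('k) (path_V (m-2)) (path_E (m-2)) = gam (path_V (m-2)) (path_E (m-2))"
    using fP okP wit_exists[OF fP okP] by (rule v_graph_gam)
  have vH: "v_graph TYPE('k) (cp_V n m) (cp_E n m) = gam (cp_V n m) (cp_E n m)"
    using fH okH wit_exists[OF fH okH] by (rule v_graph_gam)
  show ?thesis
    unfolding vC vP vH using partA[OF assms] partB[OF assms] by simp
qed

end
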